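(* Assume the two-group Curie–Weiss model described in the context, with $\alpha_1>0$, $\alpha_2>0$, and assume the high temperature regime: $J_1<\frac{1}{\alpha_1}$, $J_2<\frac{1}{\alpha_2}$ and $\bar J^2<\big(\frac{1}{\alpha_1}-J_1\big)\big(\frac{1}{\alpha_2}-J_2\big)$. Then \[ \Big(\frac{1}{N_1}\sum_{i=1}^{N_1}X_i,\ \frac{1}{N_2}\sum_{j=1}^{N_2}Y_j\Big)\Longrightarrow (0,0)\qquad (N\to\infty), \] where $\Longrightarrow$ denotes convergence in distribution of $\mathbb R^2$-valued random variables.
   Context: Two-group Curie–Weiss model: for each $N\in\mathbb N$ let $N_1=N_1(N)$, $N_2=N_2(N)$ be positive integers with $N_1+N_2\le N$, $N_1,N_2\to\infty$, and such that the limits $\alpha_1=\lim_{N\to\infty}N_1/N$, $\alpha_2=\lim_{N\to\infty}N_2/N$ exist. The coupling matrix is $J=\begin{pmatrix}J_1&\bar J\\ \bar J&J_2\end{pmatrix}$ with $J_1,J_2,\bar J>0$ and $\Delta:=J_1J_2-\bar J^2>0$ (so $J$ is positive definite). The spins $X_1,\dots,X_{N_1},Y_1,\dots,Y_{N_2}$ take values in $\{-1,1\}$ and have joint law \[ \mathbb P(X=x,Y=y)=Z^{-1}\exp\Big(\frac{1}{2N}\Big[J_1\Big(\sum_{i=1}^{N_1}x_i\Big)^2+J_2\Big(\sum_{j=1}^{N_2}y_j\Big)^2+2\bar J\Big(\sum_{i=1}^{N_1}x_i\Big)\Big(\sum_{j=1}^{N_2}y_j\Big)\Big]\Big), \] where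 $Z$ is the normalising constant (depending on $N$). *)

theory Defs
  imports "HOL-Probability.Probability"
begin

text \<open>Spin configurations of a group of size n: functions on {0..<n} with values in {-1,1}
  (extended by undefined outside, as in PiE).\<close>
definition spins :: "nat \<Rightarrow> (nat \<Rightarrow> real) set" where
  "spins n = PiE {..<n} (\<lambda>_. {-1, 1})"

definition cw_weight :: "real \<Rightarrow> real \<Rightarrow> real \<Rightarrow> nat \<Rightarrow> nat \<Rightarrow> nat
    \<Rightarrow> (nat \<Rightarrow> real) \<times> (nat \<Rightarrow> real) \<Rightarrow> real" where
  "cw_weight J1 J2 Jb N N1 N2 xy =
     (let S1 = (\<Sum>i<N1. fst xy i); S2 = (\<Sum>j<N2. snd xy j) in
      exp ((J1 * S1\<^sup>2 + J2 * S2\<^sup>2 + 2 * Jb * S1 * S2) / (2 * real N)))"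

definition cw_Z :: "real \<Rightarrow> real \<Rightarrow> real \<Rightarrow> nat \<Rightarrow> nat \<Rightarrow> nat \<Rightarrow> real" where
  "cw_Z J1 J2 Jb N N1 N2 = (\<Sum>xy \<in> spins N1 \<times> spins N2. cw_weight J1 J2 Jb N N1 N2 xy)"

definition cw_pmf :: "real \<Rightarrow> real \<Rightarrow> real \<Rightarrow> nat \<Rightarrow> nat \<Rightarrow> nat
    \<Rightarrow> ((nat \<Rightarrow> real) \<times> (nat \<Rightarrow> real)) pmf" where
  "cw_pmf J1 J2 Jb N N1 N2 = embed_pmf (\<lambda>xy.
     if xy \<in> spins N1 \<times> spins N2
     then cw_weight J1 J2 Jb N N1 N2 xy / cw_Z J1 J2 Jb N N1 N2 else 0)"

definition cw_magn_law :: "real \<Rightarrow> real \<Rightarrow> real \<Rightarrow> nat \<Rightarrow> nat \<Rightarrow> nat \<Rightarrow> (real \<times> real) pmf" where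
  "cw_magn_law J1 J2 Jb N N1 N2 =
     map_pmf (\<lambda>(x, y). ((\<Sum>i<N1. x i) / real N1, (\<Sum>j<N2. y j) / real N2))
       (cw_pmf J1 J2 Jb N N1 N2)"

definition weak_conv_R2 :: "(nat \<Rightarrow> (real \<times> real) measure) \<Rightarrow> (real \<times> real) measure \<Rightarrow> bool" where
  "weak_conv_R2 M_seq M \<longleftrightarrow>
     (\<forall>f :: real \<times> real \<Rightarrow> real. continuous_on UNIV f \<and> bounded (range f) \<longrightarrow>
        (\<lambda>n. integral\<^sup>L (M_seq n) f) \<longlonglongrightarrow> integral\<^sup>L M f)"

end

theory Submission
  imports Defs "HOL-Real_Asymp.Real_Asymp"
begin


lemma cosh_le_exp: "cosh (l::real) \<le> exp (l\<^sup>2/2)"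
proof -
  have main: "cosh l \<le> exp (l\<^sup>2/2)" if "l \<ge> 0" for l :: real
  proof -
    have h: "-(2*l) * (1/2) + ln (1 + (1/2) * (exp (2*l) - 1)) \<le> (2*l)\<^sup>2/8"
      by (rule Hoeffdings_lemma_aux) (use that in auto)
    have e: "exp (2*l) = exp l * exp l" by (metis exp_add mult_2)
    have e2: "exp l * exp (-l) = 1" by (simp add: exp_minus)
    have c: "1 + (1/2) * (exp (2*l) - 1) = exp l * cosh l"
      unfolding e cosh_field_def using e2 by (simp add: field_simps)
    have l: "ln (exp l * cosh l) = l + ln (cosh l)"
      by (subst ln_mult) auto
    have "ln (cosh l) \<le> l\<^sup>2/2" using h unfolding c l by (simp add: power2_eq_square)
    then have "exp (ln (cosh l)) \<le> exp (l\<^sup>2/2)" by (simp del: exp_ln_iff exp_ln)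
    then show ?thesis by simp
  qed
  show ?thesis using main[of "\<bar>l\<bar>"] by simp
qed

lemma sum_exp_spins: "(\<Sum>x\<in>spins n. exp (l * (\<Sum>i<n. x i))) = (2 * cosh l) ^ n"
proof -
  have "(\<Sum>x\<in>spins n. exp (l * (\<Sum>i<n. x i))) = (\<Sum>x\<in>spins n. \<Prod>i<n. exp (l * x i))"
    by (simp add: sum_distrib_left exp_sum)
  also have "\<dots> = (\<Prod>i<n. \<Sum>y\<in>{-1,1::real}. exp (l * y))"
    unfolding spins_def by (rule prod_sum_PiE[symmetric]) auto
  also have "\<dots> = (2 * cosh l) ^ n"
  proof -
    have "exp (-l) + exp l = 2 * cosh l" by (simp add: cosh_field_def)
    then show ?thesis by simp
  qed
  finally show ?thesis .
qed

lemma finite_spins: "finite (spins n)"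
  unfolding spins_def by (auto intro: finite_PiE)

lemma card_spins: "card (spins n) = 2 ^ n"
  unfolding spins_def by (simp add: card_PiE numeral_2_eq_2)

lemma card_fiber:
  assumes "n > 0"
  shows "real (card {x\<in>spins n. (\<Sum>i<n. x i) = s}) \<le> 2^n * exp (-(s\<^sup>2)/(2*n))"
proof -
  define l where "l = s / n"
  let ?F = "{x\<in>spins n. (\<Sum>i<n. x i) = s}"
  have "real (card ?F) * exp (l * s) = (\<Sum>x\<in>?F. exp (l * (\<Sum>i<n. x i)))"
    by simp
  also have "\<dots> \<le> (\<Sum>x\<in>spins n. exp (l * (\<Sum>i<n. x i)))"
    by (rule sum_mono2) (auto simp: finite_spins)
  also have "\<dots> = (2 * cosh l) ^ n" by (rule sum_exp_spins)
  also have "\<dots> \<le> (2 * exp (l\<^sup>2/2)) ^ n"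
    by (intro power_mono) (auto simp: cosh_le_exp)
  also have "\<dots> = 2^n * exp (n * (l\<^sup>2/2))"
    by (simp add: power_mult_distrib exp_of_nat_mult[symmetric])
  finally have "real (card ?F) \<le> 2^n * exp (n * (l\<^sup>2/2)) / exp (l * s)"
    by (simp add: field_simps)
  also have "\<dots> = 2^n * exp (n * (l\<^sup>2/2) - l * s)"
    by (simp add: exp_diff)
  also have "n * (l\<^sup>2/2) - l * s = -(s\<^sup>2)/(2*n)"
    using assms by (simp add: l_def field_simps power2_eq_square)
  finally show ?thesis .
qed

lemma spin_sum_range:
  assumes "x \<in> spins n"
  shows "(\<Sum>i<n. x i) \<in> of_int ` {-int n..int n}"
proof -
  have xi: "x i = of_int (if x i = 1 then 1 else -1)" if "i < n" for i
    using assms that unfolding spins_def by (auto simp: PiE_iff)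
  define k where "k = (\<Sum>i<n. (if x i = 1 then 1 else -1::int))"
  have "(\<Sum>i<n. x i) = of_int k"
    unfolding k_def of_int_sum by (rule sum.cong) (use xi in auto)
  moreover have "\<bar>k\<bar> \<le> int n"
  proof -
    have "\<bar>k\<bar> \<le> (\<Sum>i<n. \<bar>if x i = 1 then 1 else -1::int\<bar>)"
      unfolding k_def by (rule sum_abs)
    also have "\<dots> = (\<Sum>i<n. 1)" by (intro sum.cong) auto
    also have "\<dots> = int n" by simp
    finally show ?thesis .
  qed
  ultimately show ?thesis by (auto simp: abs_le_iff)
qed

lemma sum_spins_bound:
  assumes "n > 0" and g: "\<And>s. g s \<ge> 0"
  shows "(\<Sum>x\<in>spins n. g (\<Sum>i<n. x i)) \<le>
     2^n * (\<Sum>k\<in>{-int n..int n}. exp (-((of_int k)\<^sup>2)/(2*n)) * g (of_int k))"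
proof -
  let ?T = "(of_int ` {-int n..int n}) :: real set"
  have "(\<Sum>x\<in>spins n. g (\<Sum>i<n. x i)) =
        (\<Sum>y\<in>?T. \<Sum>x\<in>{x\<in>spins n. (\<Sum>i<n. x i) = y}. g (\<Sum>i<n. x i))"
    by (rule sum.group[symmetric]) (auto simp: finite_spins spin_sum_range)
  also have "\<dots> = (\<Sum>y\<in>?T. real (card {x\<in>spins n. (\<Sum>i<n. x i) = y}) * g y)"
    by (intro sum.cong refl) simp
  also have "\<dots> \<le> (\<Sum>y\<in>?T. 2^n * exp (-(y\<^sup>2)/(2*n)) * g y)"
    by (intro sum_mono mult_right_mono card_fiber assms g)
  also have "\<dots> = 2^n * (\<Sum>y\<in>?T. exp (-(y\<^sup>2)/(2*n)) * g y)"
    by (simp add: sum_distrib_left mult.assoc)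
  also have "(\<Sum>y\<in>?T. exp (-(y\<^sup>2)/(2*n)) * g y) =
       (\<Sum>k\<in>{-int n..int n}. exp (-((of_int k)\<^sup>2)/(2*n)) * g (of_int k))"
    by (subst sum.reindex) (auto simp: inj_on_def)
  finally show ?thesis .
qed



lemma double_bound:
  assumes n1: "n1 > 0" and n2: "n2 > 0" and H: "\<And>s t. H s t \<ge> 0"
  shows "(\<Sum>xy\<in>spins n1 \<times> spins n2. H (\<Sum>i<n1. fst xy i) (\<Sum>j<n2. snd xy j)) \<le>
     2^n1 * 2^n2 * (\<Sum>j\<in>{-int n1..int n1}. \<Sum>k\<in>{-int n2..int n2}.
        exp (-((of_int j)\<^sup>2)/(2*n1)) * exp (-((of_int k)\<^sup>2)/(2*n2)) * H (of_int j) (of_int k))"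
proof -
  let ?e1 = "\<lambda>j::int. exp (-((of_int j)\<^sup>2)/(2*n1)) :: real"
  let ?e2 = "\<lambda>k::int. exp (-((of_int k)\<^sup>2)/(2*n2)) :: real"
  have "(\<Sum>xy\<in>spins n1 \<times> spins n2. H (\<Sum>i<n1. fst xy i) (\<Sum>j<n2. snd xy j)) =
        (\<Sum>x\<in>spins n1. \<Sum>y\<in>spins n2. H (\<Sum>i<n1. x i) (\<Sum>j<n2. y j))"
    by (subst sum.cartesian_product) (simp add: case_prod_unfold)
  also have "\<dots> \<le> (\<Sum>x\<in>spins n1. 2^n2 * (\<Sum>k\<in>{-int n2..int n2}. ?e2 k * H (\<Sum>i<n1. x i) (of_int k)))"
    by (intro sum_mono sum_spins_bound n2 H)
  also have "\<dots> = 2^n2 * (\<Sum>k\<in>{-int n2..int n2}. ?e2 k * (\<Sum>x\<in>spins n1. H (\<Sum>i<n1. x i) (of_int k)))"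
    by (simp add: sum_distrib_left sum.swap[of _ "spins n1"] mult.assoc)
  also have "\<dots> \<le> 2^n2 * (\<Sum>k\<in>{-int n2..int n2}. ?e2 k * (2^n1 * (\<Sum>j\<in>{-int n1..int n1}. ?e1 j * H (of_int j) (of_int k))))"
    by (intro mult_left_mono sum_mono sum_spins_bound n1 H) auto
  also have "\<dots> = 2^n1 * 2^n2 * (\<Sum>j\<in>{-int n1..int n1}. \<Sum>k\<in>{-int n2..int n2}. ?e1 j * ?e2 k * H (of_int j) (of_int k))"
    by (simp add: sum_distrib_left sum.swap[of _ "{-int n2..int n2}"] mult_ac)
  finally show ?thesis .
qed

lemma quad_ge:
  fixes a b c u v :: real
  assumes "a > 0" "b\<^sup>2 \<le> a * c"
  shows "0 \<le> a * u\<^sup>2 + c * v\<^sup>2 - 2 * b * u * v"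
proof -
  have "a * (a * u\<^sup>2 + c * v\<^sup>2 - 2 * b * u * v) = (a * u - b * v) ^ 2 + (a * c - b ^ 2) * v ^ 2"
    by (simp add: algebra_simps power2_eq_square)
  also have "\<dots> \<ge> 0" using assms by simp
  finally show ?thesis using assms(1) by (simp add: zero_le_mult_iff)
qed

lemma magn_integral:
  fixes f :: "real \<times> real \<Rightarrow> real"
  assumes "n1 > 0" "n2 > 0"
  defines "\<Omega> \<equiv> spins n1 \<times> spins n2"
  shows "cw_Z J1 J2 Jb N n1 n2 > 0"
    and "integral\<^sup>L (measure_pmf (cw_magn_law J1 J2 Jb N n1 n2)) f =
      (\<Sum>xy\<in>\<Omega>. cw_weight J1 J2 Jb N n1 n2 xy / cw_Z J1 J2 Jb N n1 n2 *
         f ((\<Sum>i<n1. fst xy i) / real n1, (\<Sum>j<n2. snd xy j) / real n2))"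
proof -
  let ?w = "cw_weight J1 J2 Jb N n1 n2" and ?Z = "cw_Z J1 J2 Jb N n1 n2"
  have fin: "finite \<Omega>" unfolding \<Omega>_def by (simp add: finite_spins)
  have ne: "\<Omega> \<noteq> {}" unfolding \<Omega>_def using card_spins[of n1] card_spins[of n2]
    by (metis card.empty power_not_zero times_eq_iff zero_neq_numeral Sigma_empty1 Sigma_empty2)
  have wpos: "?w xy > 0" for xy by (simp add: cw_weight_def Let_def)
  show Zpos: "?Z > 0" unfolding cw_Z_def \<Omega>_def[symmetric]
    using fin ne wpos by (intro sum_pos) auto
  define g where "g = (\<lambda>xy. if xy \<in> \<Omega> then ?w xy / ?Z else 0)"
  have gnn: "g x \<ge> 0" for x unfolding g_def
    using less_imp_le[OF wpos[of x]] less_imp_le[OF Zpos] by simp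
  have "(\<integral>\<^sup>+x. ennreal (g x) \<partial>count_space UNIV) = (\<Sum>x\<in>\<Omega>. ennreal (g x))"
    by (rule nn_integral_count_space') (auto simp: fin g_def)
  also have "\<dots> = ennreal (\<Sum>x\<in>\<Omega>. g x)" using gnn by simp
  also have "(\<Sum>x\<in>\<Omega>. g x) = (\<Sum>x\<in>\<Omega>. ?w x) / ?Z"
    unfolding g_def by (simp add: sum_divide_distrib)
  also have "\<dots> = 1" using Zpos unfolding cw_Z_def \<Omega>_def by simp
  finally have int1: "(\<integral>\<^sup>+x. ennreal (g x) \<partial>count_space UNIV) = 1" by simp
  have pmf: "pmf (cw_pmf J1 J2 Jb N n1 n2) x = g x" for x
    unfolding cw_pmf_def g_def[symmetric] \<Omega>_def[symmetric]
    by (rule pmf_embed_pmf[OF gnn int1])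
  have "integral\<^sup>L (measure_pmf (cw_magn_law J1 J2 Jb N n1 n2)) f =
      integral\<^sup>L (measure_pmf (cw_pmf J1 J2 Jb N n1 n2))
        (\<lambda>xy. f ((\<Sum>i<n1. fst xy i) / real n1, (\<Sum>j<n2. snd xy j) / real n2))"
    unfolding cw_magn_law_def by (simp add: case_prod_unfold)
  also have "\<dots> = (\<Sum>xy\<in>\<Omega>. pmf (cw_pmf J1 J2 Jb N n1 n2) xy *\<^sub>R
        f ((\<Sum>i<n1. fst xy i) / real n1, (\<Sum>j<n2. snd xy j) / real n2))"
    by (rule integral_measure_pmf[OF fin]) (auto simp: set_pmf_eq pmf g_def split: if_splits)
  also have "\<dots> = (\<Sum>xy\<in>\<Omega>. ?w xy / ?Z *
         f ((\<Sum>i<n1. fst xy i) / real n1, (\<Sum>j<n2. snd xy j) / real n2))"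
    by (intro sum.cong refl) (simp add: pmf g_def)
  finally show "integral\<^sup>L (measure_pmf (cw_magn_law J1 J2 Jb N n1 n2)) f = \<dots>" .
qed



lemma tail:
  fixes N n1 n2 :: nat and J1 J2 Jb \<epsilon> D :: real and bad :: "real \<Rightarrow> real \<Rightarrow> bool"
  assumes n1: "n1 > 0" and n2: "n2 > 0" and N: "N > 0" and \<epsilon>: "\<epsilon> > 0"
    and J1: "J1 > 0" and Jd: "Jb\<^sup>2 \<le> J1 * J2"
    and quad: "\<And>u v. \<epsilon> * (u\<^sup>2 + v\<^sup>2) \<le> (N/n1 - J1) * u\<^sup>2 + (N/n2 - J2) * v\<^sup>2 - 2 * Jb * u * v"
    and badD: "\<And>s t. bad s t \<Longrightarrow> D \<le> s\<^sup>2 + t\<^sup>2"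
  shows "(\<Sum>xy\<in>spins n1 \<times> spins n2. cw_weight J1 J2 Jb N n1 n2 xy / cw_Z J1 J2 Jb N n1 n2 *
            (if bad (\<Sum>i<n1. fst xy i) (\<Sum>j<n2. snd xy j) then 1 else 0))
         \<le> (2*real n1+1) * (2*real n2+1) * exp (-\<epsilon>*D/(2*real N))"
proof -
  define Q where "Q = (\<lambda>s t::real. (J1 * s\<^sup>2 + J2 * t\<^sup>2 + 2 * Jb * s * t) / (2 * real N))"
  define H where "H = (\<lambda>s t. exp (Q s t) * (if bad s t then 1 else 0::real))"
  let ?\<Omega> = "spins n1 \<times> spins n2"
  let ?w = "cw_weight J1 J2 Jb N n1 n2" and ?Z = "cw_Z J1 J2 Jb N n1 n2"
  let ?S1 = "\<lambda>xy. (\<Sum>i<n1. fst xy i)" and ?S2 = "\<lambda>xy. (\<Sum>j<n2. snd xy j)"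
  have w: "?w xy = exp (Q (?S1 xy) (?S2 xy))" for xy
    by (simp add: cw_weight_def Let_def Q_def)
  have Qnn: "Q s t \<ge> 0" for s t
  proof -
    have "0 \<le> J1 * s\<^sup>2 + J2 * t\<^sup>2 - 2 * (-Jb) * s * t"
      by (rule quad_ge) (use J1 Jd in auto)
    then show ?thesis unfolding Q_def by simp
  qed
  have fin: "finite ?\<Omega>" by (simp add: finite_spins)
  have Zge: "?Z \<ge> 2^n1 * 2^n2"
  proof -
    have "(2::real)^n1 * 2^n2 = (\<Sum>xy\<in>?\<Omega>. 1)"
      by (simp add: card_cartesian_product card_spins)
    also have "\<dots> \<le> (\<Sum>xy\<in>?\<Omega>. ?w xy)"
      by (intro sum_mono) (simp add: w Qnn)
    finally show ?thesis unfolding cw_Z_def .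
  qed
  have Zpos: "?Z > 0"
  proof -
    have "(0::real) < 2^n1 * 2^n2" by simp
    then show ?thesis using Zge by linarith
  qed
  have Hnn: "H s t \<ge> 0" for s t by (simp add: H_def)
  have "(\<Sum>xy\<in>?\<Omega>. ?w xy / ?Z * (if bad (?S1 xy) (?S2 xy) then 1 else 0))
      = (\<Sum>xy\<in>?\<Omega>. H (?S1 xy) (?S2 xy)) / ?Z"
    by (simp add: sum_divide_distrib H_def w)
  also have "\<dots> \<le> (\<Sum>xy\<in>?\<Omega>. H (?S1 xy) (?S2 xy)) / (2^n1 * 2^n2)"
    by (intro divide_left_mono sum_nonneg Hnn Zge mult_pos_pos Zpos) auto
  also have "\<dots> \<le> (\<Sum>j\<in>{-int n1..int n1}. \<Sum>k\<in>{-int n2..int n2}.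
        exp (-((of_int j)\<^sup>2)/(2*n1)) * exp (-((of_int k)\<^sup>2)/(2*n2)) * H (of_int j) (of_int k))"
    using double_bound[of n1 n2 H, OF n1 n2 Hnn] by (simp add: field_simps)
  also have "\<dots> \<le> (\<Sum>j\<in>{-int n1..int n1}. \<Sum>k\<in>{-int n2..int n2}. exp (-\<epsilon>*D/(2*real N)))"
  proof (intro sum_mono)
    fix j k :: int
    define s where "s = real_of_int j"
    define t where "t = real_of_int k"
    show "exp (-((of_int j)\<^sup>2)/(2*n1)) * exp (-((of_int k)\<^sup>2)/(2*n2)) * H (of_int j) (of_int k)
        \<le> exp (-\<epsilon>*D/(2*real N))"
    proof (cases "bad s t")
      case False then show ?thesis by (simp add: H_def s_def t_def)
    next
      case True
      have id: "-(s\<^sup>2)/(2*n1) + -(t\<^sup>2)/(2*n2) + Q s t =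
          -(N/2) * ((N/n1 - J1) * (s/N)\<^sup>2 + (N/n2 - J2) * (t/N)\<^sup>2 - 2 * Jb * (s/N) * (t/N))"
        using n1 n2 N by (simp add: Q_def field_simps power2_eq_square)
      also have "\<dots> \<le> -(N/2) * (\<epsilon> * ((s/N)\<^sup>2 + (t/N)\<^sup>2))"
        using quad[of "s/N" "t/N"] N by (intro mult_left_mono_neg) auto
      also have "\<dots> = -\<epsilon> * (s\<^sup>2 + t\<^sup>2) / (2*N)"
        using N by (simp add: field_simps power2_eq_square)
      also have "\<dots> \<le> -\<epsilon> * D / (2*N)"
        using badD[OF True] \<epsilon> N by (intro divide_right_mono) auto
      finally have le: "exp (-(s\<^sup>2)/(2*n1) + -(t\<^sup>2)/(2*n2) + Q s t) \<le> exp (-\<epsilon> * D / (2*N))"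
        by simp
      have e: "exp (-(s\<^sup>2)/(2*n1)) * exp (-(t\<^sup>2)/(2*n2)) * exp (Q s t) =
          exp (-(s\<^sup>2)/(2*n1) + -(t\<^sup>2)/(2*n2) + Q s t)" by (simp only: exp_add)
      show ?thesis using True le e unfolding s_def[symmetric] t_def[symmetric] H_def by simp
    qed
  qed
  also have "\<dots> = (2*real n1+1) * (2*real n2+1) * exp (-\<epsilon>*D/(2*real N))"
    by (simp add: algebra_simps)
  finally show ?thesis .
qed



theorem theorem1:
  fixes N1 N2 :: "nat \<Rightarrow> nat" and J1 J2 Jb \<alpha>1 \<alpha>2 :: real
  assumes sizes: "\<forall>\<^sub>F N in sequentially. 0 < N1 N \<and> 0 < N2 N \<and> N1 N + N2 N \<le> N"
    and N1_inf: "filterlim N1 at_top sequentially"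
    and N2_inf: "filterlim N2 at_top sequentially"
    and \<alpha>1_lim: "(\<lambda>N. real (N1 N) / real N) \<longlonglongrightarrow> \<alpha>1"
    and \<alpha>2_lim: "(\<lambda>N. real (N2 N) / real N) \<longlonglongrightarrow> \<alpha>2"
    and \<alpha>_pos: "\<alpha>1 > 0" "\<alpha>2 > 0"
    and J_pos: "J1 > 0" "J2 > 0" "Jb > 0"
    and J_pd: "J1 * J2 - Jb\<^sup>2 > 0"
    and high_temp: "J1 < 1 / \<alpha>1" "J2 < 1 / \<alpha>2" "Jb\<^sup>2 < (1 / \<alpha>1 - J1) * (1 / \<alpha>2 - J2)"
  shows "weak_conv_R2 (\<lambda>N. measure_pmf (cw_magn_law J1 J2 Jb N (N1 N) (N2 N)))
           (measure_pmf (return_pmf (0, 0)))"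
proof -
  define P where "P = 1/\<alpha>1 - J1"
  define R where "R = 1/\<alpha>2 - J2"
  have P: "P > 0" and R: "R > 0" using high_temp by (auto simp: P_def R_def)
  define g where "g = P * R - Jb\<^sup>2"
  have g: "g > 0" using high_temp by (simp add: g_def P_def R_def)
  define \<epsilon> where "\<epsilon> = min (min P R / 4) (g / (4*(P+R)))"
  have \<epsilon>: "\<epsilon> > 0" using P R g by (simp add: \<epsilon>_def)
  have \<epsilon>P: "4*\<epsilon> \<le> P" and \<epsilon>R: "4*\<epsilon> \<le> R" by (auto simp: \<epsilon>_def)
  have \<epsilon>g: "\<epsilon> * (4*(P+R)) \<le> g"
  proof -
    have "\<epsilon> \<le> g / (4*(P+R))" by (simp add: \<epsilon>_def)
    then show ?thesis using P R by (simp add: field_simps)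
  qed
  have key: "Jb\<^sup>2 \<le> (P - 2*\<epsilon>) * (R - 2*\<epsilon>)"
  proof -
    have e1: "(P - 2*\<epsilon>) * (R - 2*\<epsilon>) - Jb\<^sup>2 = (g/2 - 2*\<epsilon>*(P+R)) + g/2 + 4*\<epsilon>\<^sup>2"
      unfolding g_def by (simp add: algebra_simps power2_eq_square)
    have "2*\<epsilon>*(P+R) \<le> g/2" using \<epsilon>g by (simp add: algebra_simps)
    then have "0 \<le> (g/2 - 2*\<epsilon>*(P+R)) + g/2 + 4*\<epsilon>\<^sup>2" using g
      by (intro add_nonneg_nonneg) auto
    then show ?thesis using e1 by simp
  qed
  have lim1: "(\<lambda>N. real N / real (N1 N) - J1) \<longlonglongrightarrow> P"
  proof -
    have "(\<lambda>N. inverse (real (N1 N) / real N)) \<longlonglongrightarrow> inverse \<alpha>1"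
      using \<alpha>_pos by (intro tendsto_inverse \<alpha>1_lim) auto
    then have "(\<lambda>N. real N / real (N1 N) - J1) \<longlonglongrightarrow> inverse \<alpha>1 - J1"
      by (intro tendsto_diff) (simp_all add: inverse_divide)
    then show ?thesis by (simp add: P_def divide_inverse)
  qed
  have lim2: "(\<lambda>N. real N / real (N2 N) - J2) \<longlonglongrightarrow> R"
  proof -
    have "(\<lambda>N. inverse (real (N2 N) / real N)) \<longlonglongrightarrow> inverse \<alpha>2"
      using \<alpha>_pos by (intro tendsto_inverse \<alpha>2_lim) auto
    then have "(\<lambda>N. real N / real (N2 N) - J2) \<longlonglongrightarrow> inverse \<alpha>2 - J2"
      by (intro tendsto_diff) (simp_all add: inverse_divide)
    then show ?thesis by (simp add: R_def divide_inverse)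
  qed
  have ev1: "\<forall>\<^sub>F N in sequentially. real N / real (N1 N) - J1 > P - \<epsilon>"
    by (rule order_tendstoD(1)[OF lim1]) (use \<epsilon> in simp)
  have ev2: "\<forall>\<^sub>F N in sequentially. real N / real (N2 N) - J2 > R - \<epsilon>"
    by (rule order_tendstoD(1)[OF lim2]) (use \<epsilon> in simp)
  have ev3: "\<forall>\<^sub>F N in sequentially. real (N1 N) / real N > \<alpha>1 / 2"
    by (rule order_tendstoD(1)[OF \<alpha>1_lim]) (use \<alpha>_pos in simp)
  have ev4: "\<forall>\<^sub>F N in sequentially. real (N2 N) / real N > \<alpha>2 / 2"
    by (rule order_tendstoD(1)[OF \<alpha>2_lim]) (use \<alpha>_pos in simp)
  define \<beta> where "\<beta> = min \<alpha>1 \<alpha>2 / 2"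
  have \<beta>: "\<beta> > 0" using \<alpha>_pos by (simp add: \<beta>_def)
  have Jd: "Jb\<^sup>2 \<le> J1 * J2" using J_pd by simp
  show ?thesis unfolding weak_conv_R2_def
  proof (intro allI impI)
    fix f :: "real \<times> real \<Rightarrow> real"
    assume "continuous_on UNIV f \<and> bounded (range f)"
    then have cont: "continuous_on UNIV f" and bdd: "bounded (range f)" by auto
    have ret: "integral\<^sup>L (measure_pmf (return_pmf (0::real, 0::real))) f = f (0, 0)"
      by (subst integral_measure_pmf[of "{(0,0)}"]) auto
    obtain Bd where Bd: "\<And>z. \<bar>f z\<bar> \<le> Bd"
      using bdd unfolding bounded_iff by auto
    have Bd0: "Bd \<ge> 0" using Bd[of "(0,0)"] by simp
    show "(\<lambda>N. integral\<^sup>L (measure_pmf (cw_magn_law J1 J2 Jb N (N1 N) (N2 N))) f)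
          \<longlonglongrightarrow> integral\<^sup>L (measure_pmf (return_pmf (0, 0))) f"
      unfolding ret tendsto_iff
    proof (intro allI impI)
      fix \<eta> :: real assume \<eta>: "\<eta> > 0"
      have "continuous (at (0,0)) f" using cont by (simp add: continuous_on_eq_continuous_at)
      then obtain d where d: "d > 0" and dc: "\<And>z. dist z (0,0) < d \<Longrightarrow> dist (f z) (f (0,0)) < \<eta>/2"
        unfolding continuous_at_eps_delta using \<eta> by (metis half_gt_zero)
      define \<delta> where "\<delta> = d / 2"
      have \<delta>: "\<delta> > 0" using d by (simp add: \<delta>_def)
      define c where "c = \<epsilon> * \<delta>\<^sup>2 * \<beta>\<^sup>2 / 2"
      have c: "c > 0" using \<epsilon> \<delta> \<beta> by (simp add: c_def)
      have lim0: "(\<lambda>N. (2 * real N + 1)\<^sup>2 * exp (-c * real N)) \<longlonglongrightarrow> 0"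
        using c by real_asymp
      define \<eta>' where "\<eta>' = \<eta> / (2 * (2 * Bd + 1))"
      have \<eta>': "\<eta>' > 0" using \<eta> Bd0 by (simp add: \<eta>'_def)
      have ev5: "\<forall>\<^sub>F N in sequentially. (2 * real N + 1)\<^sup>2 * exp (-c * real N) < \<eta>'"
        by (rule order_tendstoD(2)[OF lim0 \<eta>'])
      show "\<forall>\<^sub>F N in sequentially.
          dist (integral\<^sup>L (measure_pmf (cw_magn_law J1 J2 Jb N (N1 N) (N2 N))) f) (f (0, 0)) < \<eta>"
        using sizes ev1 ev2 ev3 ev4 ev5
      proof eventually_elim
        case (elim N)
        define n1 where "n1 = N1 N"
        define n2 where "n2 = N2 N"
        have n1: "n1 > 0" and n2: "n2 > 0" and nN: "n1 + n2 \<le> N"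
          using elim by (auto simp: n1_def n2_def)
        have N: "N > 0" using n1 nN by simp
        have p: "real N / real n1 - J1 > P - \<epsilon>" and r: "real N / real n2 - J2 > R - \<epsilon>"
          using elim by (auto simp: n1_def n2_def)
        have a1: "real n1 \<ge> \<beta> * N"
        proof -
          have "real n1 / real N > \<alpha>1 / 2" using elim by (simp add: n1_def)
          then have "real n1 > \<alpha>1 / 2 * N" using N by (simp add: field_simps)
          moreover have "\<beta> \<le> \<alpha>1 / 2" by (simp add: \<beta>_def)
          ultimately show ?thesis using N by (smt (verit) mult_right_mono of_nat_0_le_iff)
        qed
        have a2: "real n2 \<ge> \<beta> * N"
        proof -
          have "real n2 / real N > \<alpha>2 / 2" using elim by (simp add: n2_def)
          then have "real n2 > \<alpha>2 / 2 * N" using N by (simp add: field_simps)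
          moreover have "\<beta> \<le> \<alpha>2 / 2" by (simp add: \<beta>_def)
          ultimately show ?thesis using N by (smt (verit) mult_right_mono of_nat_0_le_iff)
        qed
        have quad: "\<epsilon> * (u\<^sup>2 + v\<^sup>2) \<le> (N/n1 - J1) * u\<^sup>2 + (N/n2 - J2) * v\<^sup>2 - 2 * Jb * u * v"
          for u v :: real
        proof -
          have A: "N/n1 - J1 - \<epsilon> > 0" using p \<epsilon>P \<epsilon> by linarith
          have "(P - 2*\<epsilon>) * (R - 2*\<epsilon>) \<le> (N/n1 - J1 - \<epsilon>) * (N/n2 - J2 - \<epsilon>)"
            using p r \<epsilon>P \<epsilon>R \<epsilon> by (intro mult_mono) auto
          then have "Jb\<^sup>2 \<le> (N/n1 - J1 - \<epsilon>) * (N/n2 - J2 - \<epsilon>)" using key by linarith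
          from quad_ge[OF A this, of u v] show ?thesis by (simp add: algebra_simps)
        qed
        define bad where "bad = (\<lambda>s t. \<not> (\<bar>s / n1\<bar> < \<delta> \<and> \<bar>t / n2\<bar> < \<delta>))"
        define D where "D = (\<delta> * \<beta> * N)\<^sup>2"
        have badD: "D \<le> s\<^sup>2 + t\<^sup>2" if "bad s t" for s t
        proof -
          have "\<delta> * \<beta> * N \<le> \<bar>s\<bar> \<or> \<delta> * \<beta> * N \<le> \<bar>t\<bar>"
          proof (cases "\<bar>s / n1\<bar> < \<delta>")
            case True
            then have "\<bar>t / n2\<bar> \<ge> \<delta>" using that by (auto simp: bad_def)
            then have "\<delta> * n2 \<le> \<bar>t\<bar>" using n2 by (simp add: field_simps)
            moreover have "\<delta> * (\<beta> * N) \<le> \<delta> * n2" using a2 \<delta> by simp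
            ultimately show ?thesis by (simp add: mult.assoc)
          next
            case False
            then have "\<delta> * n1 \<le> \<bar>s\<bar>" using n1 by (simp add: field_simps)
            moreover have "\<delta> * (\<beta> * N) \<le> \<delta> * n1" using a1 \<delta> by simp
            ultimately show ?thesis by (simp add: mult.assoc)
          qed
          moreover have "0 \<le> \<delta> * \<beta> * N" using \<delta> \<beta> by simp
          ultimately have "D \<le> s\<^sup>2 \<or> D \<le> t\<^sup>2"
            unfolding D_def by (metis power2_abs power_mono)
          then show ?thesis by (smt (verit) zero_le_power2)
        qed
        let ?w = "cw_weight J1 J2 Jb N n1 n2" and ?Z = "cw_Z J1 J2 Jb N n1 n2"
        let ?\<Omega> = "spins n1 \<times> spins n2"
        let ?m = "\<lambda>xy. ((\<Sum>i<n1. fst xy i) / real n1, (\<Sum>j<n2. snd xy j) / real n2)"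
        let ?ind = "\<lambda>xy. (if bad (\<Sum>i<n1. fst xy i) (\<Sum>j<n2. snd xy j) then 1 else 0::real)"
        have Zpos: "?Z > 0" by (rule magn_integral(1)[OF n1 n2])
        have Eq: "integral\<^sup>L (measure_pmf (cw_magn_law J1 J2 Jb N n1 n2)) f =
            (\<Sum>xy\<in>?\<Omega>. ?w xy / ?Z * f (?m xy))"
          by (rule magn_integral(2)[OF n1 n2])
        have T: "(\<Sum>xy\<in>?\<Omega>. ?w xy / ?Z * ?ind xy) \<le> (2*real n1+1) * (2*real n2+1) * exp (-\<epsilon>*D/(2*real N))"
          by (rule tail[OF n1 n2 N \<epsilon> J_pos(1) Jd quad badD])
        have cD: "-\<epsilon>*D/(2*real N) = -c * real N"
          unfolding D_def c_def using N by (simp add: power_mult_distrib power2_eq_square)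
        have "(2*real n1+1) * (2*real n2+1) * exp (-\<epsilon>*D/(2*real N))
            \<le> (2*real N+1) * (2*real N+1) * exp (-c * real N)"
          unfolding cD using nN by (intro mult_right_mono mult_mono) auto
        then have T2: "(\<Sum>xy\<in>?\<Omega>. ?w xy / ?Z * ?ind xy) \<le> (2 * real N + 1)\<^sup>2 * exp (-c * real N)"
          using T by (simp add: power2_eq_square)
        have wnn: "?w xy / ?Z \<ge> 0" for xy
          using Zpos by (simp add: cw_weight_def Let_def less_imp_le)
        have sum1: "(\<Sum>xy\<in>?\<Omega>. ?w xy / ?Z) = 1"
          using Zpos by (simp add: sum_divide_distrib[symmetric] cw_Z_def)
        have pw: "\<bar>f (?m xy) - f (0,0)\<bar> \<le> \<eta>/2 + 2 * Bd * ?ind xy" for xy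
        proof (cases "bad (\<Sum>i<n1. fst xy i) (\<Sum>j<n2. snd xy j)")
          case True
          then show ?thesis using Bd[of "?m xy"] Bd[of "(0,0)"] \<eta> by simp
        next
          case False
          then have "\<bar>fst (?m xy)\<bar> < \<delta>" "\<bar>snd (?m xy)\<bar> < \<delta>" by (auto simp: bad_def)
          moreover have "dist (?m xy) (0,0) \<le> \<bar>fst (?m xy)\<bar> + \<bar>snd (?m xy)\<bar>"
            using norm_Pair_le[of "fst (?m xy)" "snd (?m xy)"] by (simp add: dist_norm)
          ultimately have "dist (?m xy) (0,0) < d" using \<delta>_def by linarith
          then have "dist (f (?m xy)) (f (0,0)) < \<eta>/2" by (rule dc)
          then show ?thesis using False by (simp add: dist_real_def)
        qed
        have "\<bar>(\<Sum>xy\<in>?\<Omega>. ?w xy / ?Z * f (?m xy)) - f (0,0)\<bar>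
            = \<bar>\<Sum>xy\<in>?\<Omega>. ?w xy / ?Z * (f (?m xy) - f (0,0))\<bar>"
        proof -
          have s0: "(\<Sum>xy\<in>?\<Omega>. ?w xy / ?Z * f (0,0)) = f (0,0)"
            unfolding sum_distrib_right[symmetric] sum1 by simp
          have "(\<Sum>xy\<in>?\<Omega>. ?w xy / ?Z * (f (?m xy) - f (0,0))) = (\<Sum>xy\<in>?\<Omega>. ?w xy / ?Z * f (?m xy)) - f (0,0)"
            unfolding right_diff_distrib sum_subtractf s0 by (rule refl)
          then show ?thesis by (simp only:)
        qed
        also have "\<dots> \<le> (\<Sum>xy\<in>?\<Omega>. \<bar>?w xy / ?Z * (f (?m xy) - f (0,0))\<bar>)"
          by (rule sum_abs)
        also have "\<dots> \<le> (\<Sum>xy\<in>?\<Omega>. ?w xy / ?Z * (\<eta>/2 + 2 * Bd * ?ind xy))"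
        proof (rule sum_mono)
          fix xy
          have "\<bar>?w xy / ?Z * (f (?m xy) - f (0,0))\<bar> = ?w xy / ?Z * \<bar>f (?m xy) - f (0,0)\<bar>"
            unfolding abs_mult abs_of_nonneg[OF wnn] by (rule refl)
          also have "\<dots> \<le> ?w xy / ?Z * (\<eta>/2 + 2 * Bd * ?ind xy)"
            by (rule mult_left_mono[OF pw wnn])
          finally show "\<bar>?w xy / ?Z * (f (?m xy) - f (0,0))\<bar> \<le> ?w xy / ?Z * (\<eta>/2 + 2 * Bd * ?ind xy)" .
        qed
        also have "\<dots> = \<eta>/2 + 2 * Bd * (\<Sum>xy\<in>?\<Omega>. ?w xy / ?Z * ?ind xy)"
        proof -
          have a: "(\<Sum>xy\<in>?\<Omega>. ?w xy / ?Z * (\<eta>/2)) = \<eta>/2"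
            unfolding sum_distrib_right[symmetric] sum1 by simp
          have b: "(\<Sum>xy\<in>?\<Omega>. ?w xy / ?Z * (2 * Bd * ?ind xy)) = 2 * Bd * (\<Sum>xy\<in>?\<Omega>. ?w xy / ?Z * ?ind xy)"
            unfolding sum_distrib_left by (intro sum.cong refl) (simp only: mult_ac)
          show ?thesis unfolding distrib_left sum.distrib a b by (rule refl)
        qed
        also have "\<dots> \<le> \<eta>/2 + 2 * Bd * \<eta>'"
          using T2 elim Bd0 by (intro add_left_mono mult_left_mono) auto
        also have "\<dots> < \<eta>"
        proof -
          have "2 * Bd * \<eta>' = \<eta> * (2*Bd / (2 * (2 * Bd + 1)))" using Bd0 by (simp add: \<eta>'_def field_simps)
          also have "\<dots> < \<eta> * (1/2)" using \<eta> Bd0 by (intro mult_strict_left_mono) (auto simp: field_simps)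
          finally show ?thesis by simp
        qed
        finally show ?case unfolding dist_real_def Eq[unfolded n1_def n2_def] n1_def n2_def .
      qed
    qed
  qed
qed


end
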